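(* For integers $n,m\ge 3$ and positive integers $q_1,\dots,q_n,r_1,\dots,r_n,s_1,\dots,s_m,p_1,\dots,p_m$, $${\rm dim}_s\big(K_{n,n}^{-M}(q_1,\dots,q_n,r_1,\dots,r_n)\diamond K_{m,m}^{-M}(s_1,\dots,s_m,p_1,\dots,p_m)\big)=\sum_{i=1}^{n}\Big((q_i+r_i)\sum_{j=1}^{m}(s_j+p_j)\Big)-nm.$$
   Context: The modular product $G\diamond H$ has vertex set $V(G)\times V(H)$; distinct vertices $(g,h)$ and $(g',h')$ are adjacent iff ($g=g'$ and $hh'\in E(H)$), or ($gg'\in E(G)$ and $h=h'$), or ($gg'\in E(G)$ and $hh'\in E(H)$), or ($g\neq g'$, $h\neq h'$, $gg'\notin E(G)$ and $hh'\notin E(H)$). $K_{n,n}^{-M}(q_1,\dots,q_n,r_1,\dots,r_n)$ is the graph whose vertex set is a disjoint union of sets $X_1,\dots,X_n,Y_1,\dots,Y_n$ with $|X_i|=q_i$, $|Y_i|=r_i$, where each $X_i$ and each $Y_i$ induces a clique, every vertex of $X_i$ is adjacent to every vertex of $Y_j$ whenever $i\neq j$, and there are no other edges. ${\rm dim}_s(X)$ is the strong metric dimension: the minimum size of $S\subseteq V(X)$ such that for all distinct $x,y$ some $z\in S$ has $d_X(y,z)=d_X(y,x)+d_X(x,z)$ or $d_X(x,z)=d_X(x,y)+d_X(y,z)$. *)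

theory Defs
  imports Main "HOL-Library.Extended_Nat"
begin

type_synonym 'a graph = "'a set \<times> ('a \<Rightarrow> 'a \<Rightarrow> bool)"

definition verts :: "'a graph \<Rightarrow> 'a set" where "verts G = fst G"
definition adj :: "'a graph \<Rightarrow> 'a \<Rightarrow> 'a \<Rightarrow> bool" where "adj G = snd G"

definition walk :: "'a graph \<Rightarrow> 'a list \<Rightarrow> bool" where
  "walk G xs \<longleftrightarrow> xs \<noteq> [] \<and> set xs \<subseteq> verts G \<and>
     (\<forall>i. Suc i < length xs \<longrightarrow> adj G (xs ! i) (xs ! Suc i))"

text \<open>Graph distance: length of a shortest walk; infinity if there is none.\<close>
definition gdist :: "'a graph \<Rightarrow> 'a \<Rightarrow> 'a \<Rightarrow> enat" where
  "gdist G x y = (INF xs \<in> {xs. walk G xs \<and> hd xs = x \<and> last xs = y}. enat (length xs - 1))"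

definition strong_resolving :: "'a graph \<Rightarrow> 'a set \<Rightarrow> bool" where
  "strong_resolving G S \<longleftrightarrow> S \<subseteq> verts G \<and>
     (\<forall>x\<in>verts G. \<forall>y\<in>verts G. x \<noteq> y \<longrightarrow>
        (\<exists>z\<in>S. gdist G y z = gdist G y x + gdist G x z \<or>
                gdist G x z = gdist G x y + gdist G y z))"

definition sdim :: "'a graph \<Rightarrow> nat" where
  "sdim G = (LEAST k. \<exists>S. strong_resolving G S \<and> card S = k)"

definition modprod :: "'a graph \<Rightarrow> 'b graph \<Rightarrow> ('a \<times> 'b) graph" where
  "modprod G H = (verts G \<times> verts H,
     \<lambda>(g,h) (g',h'). (g,h) \<noteq> (g',h') \<and>
        ((g = g' \<and> adj H h h') \<or> (adj G g g' \<and> h = h') \<or> (adj G g g' \<and> adj H h h') \<or>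
         (g \<noteq> g' \<and> h \<noteq> h' \<and> \<not> adj G g g' \<and> \<not> adj H h h')))"

text \<open>K_{n,n}^{-M}(q_1..q_n, r_1..r_n), indices shifted to 0..n-1. A vertex (False,i,k) lies
  in X_i (k < q i), a vertex (True,i,k) lies in Y_i (k < r i).\<close>
definition KM :: "nat \<Rightarrow> (nat \<Rightarrow> nat) \<Rightarrow> (nat \<Rightarrow> nat) \<Rightarrow> (bool \<times> nat \<times> nat) graph" where
  "KM n q r = ({(b,i,k). i < n \<and> k < (if b then r i else q i)},
     \<lambda>(b,i,k) (b',i',k'). (b,i,k) \<noteq> (b',i',k') \<and>
        ((b = b' \<and> i = i') \<or> (b \<noteq> b' \<and> i \<noteq> i')))"

end

theory Submission
  imports Defs
begin


lemma walk_single[simp]: "walk G [x] \<longleftrightarrow> x \<in> verts G"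
  by (simp add: walk_def)

lemma walk_Cons2[simp]: "walk G (x # y # xs) \<longleftrightarrow> x \<in> verts G \<and> adj G x y \<and> walk G (y # xs)"
proof
  assume w: "walk G (x # y # xs)"
  have "\<forall>i. Suc i < length (y#xs) \<longrightarrow> adj G ((y#xs) ! i) ((y#xs) ! Suc i)"
  proof (intro allI impI)
    fix i assume "Suc i < length (y#xs)"
    then have "Suc (Suc i) < length (x#y#xs)" by simp
    with w have "adj G ((x#y#xs) ! Suc i) ((x#y#xs) ! Suc (Suc i))" unfolding walk_def by blast
    then show "adj G ((y#xs) ! i) ((y#xs) ! Suc i)" by simp
  qed
  moreover have "adj G x y" using w unfolding walk_def by force
  ultimately show "x \<in> verts G \<and> adj G x y \<and> walk G (y # xs)" using w unfolding walk_def by auto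
next
  assume h: "x \<in> verts G \<and> adj G x y \<and> walk G (y # xs)"
  show "walk G (x # y # xs)" unfolding walk_def
  proof (intro conjI allI impI)
    show "x # y # xs \<noteq> []" by simp
    show "set (x # y # xs) \<subseteq> verts G" using h unfolding walk_def by auto
    fix i assume i: "Suc i < length (x # y # xs)"
    show "adj G ((x # y # xs) ! i) ((x # y # xs) ! Suc i)"
    proof (cases i)
      case 0 then show ?thesis using h by simp
    next
      case (Suc j)
      then have "Suc j < length (y#xs)" using i by simp
      with h have "adj G ((y#xs) ! j) ((y#xs) ! Suc j)" unfolding walk_def by blast
      then show ?thesis using Suc by simp
    qed
  qed
qed

lemma gdist_le_walk: "walk G xs \<Longrightarrow> hd xs = x \<Longrightarrow> last xs = y \<Longrightarrow> gdist G x y \<le> enat (length xs - 1)"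
  unfolding gdist_def by (rule INF_lower2[of xs]) auto

lemma gdist_ge: "(\<And>xs. walk G xs \<Longrightarrow> hd xs = x \<Longrightarrow> last xs = y \<Longrightarrow> k \<le> length xs - 1) \<Longrightarrow> enat k \<le> gdist G x y"
  unfolding gdist_def by (rule INF_greatest) auto

lemma gdist_refl: "x \<in> verts G \<Longrightarrow> gdist G x x = 0"
  using gdist_le_walk[of G "[x]" x x] by (simp add: zero_enat_def[symmetric])

lemma gdist_adj: "x \<in> verts G \<Longrightarrow> y \<in> verts G \<Longrightarrow> adj G x y \<Longrightarrow> x \<noteq> y \<Longrightarrow> gdist G x y = 1"
proof -
  assume a: "x \<in> verts G" "y \<in> verts G" "adj G x y" "x \<noteq> y"
  have "gdist G x y \<le> enat 1" using gdist_le_walk[of G "[x,y]" x y] a by simp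
  moreover have "enat 1 \<le> gdist G x y"
  proof (rule gdist_ge)
    fix xs assume "walk G xs" "hd xs = x" "last xs = y"
    then show "1 \<le> length xs - 1" using a(4)
      by (cases xs rule: list.exhaust; cases "tl xs"; auto simp: walk_def)
  qed
  ultimately show ?thesis by (simp add: one_enat_def)
qed

lemma short_walk:
  assumes "walk G xs" "hd xs = x" "last xs = y" "length xs \<le> 3"
  shows "x = y \<or> adj G x y \<or> (\<exists>w. adj G x w \<and> adj G w y)"
proof -
  from assms(1) have "xs \<noteq> []" by (simp add: walk_def)
  then obtain a t where xs: "xs = a # t" by (cases xs) auto
  show ?thesis
  proof (cases t)
    case Nil then show ?thesis using assms xs by simp
  next
    case (Cons b t2)
    show ?thesis
    proof (cases t2)
      case Nil then show ?thesis using assms xs Cons by simp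
    next
      case (Cons c t3)
      then have "t3 = []" using assms(4) xs \<open>t = b # t2\<close> by simp
      then show ?thesis using assms xs \<open>t = b # t2\<close> Cons by auto
    qed
  qed
qed

lemma gdist_ge3:
  assumes "x \<noteq> y" "\<not> adj G x y" "\<not> (\<exists>w. adj G x w \<and> adj G w y)"
  shows "3 \<le> gdist G x y"
proof -
  have "enat 3 \<le> gdist G x y"
  proof (rule gdist_ge)
    fix xs assume "walk G xs" "hd xs = x" "last xs = y"
    then show "3 \<le> length xs - 1" using short_walk[of G xs x y] assms by fastforce
  qed
  then show ?thesis by (simp add: numeral_eq_enat)
qed

lemma gdist_ge2:
  assumes "x \<noteq> y" "\<not> adj G x y"
  shows "2 \<le> gdist G x y"
proof -
  have "enat 2 \<le> gdist G x y"
  proof (rule gdist_ge)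
    fix xs assume w: "walk G xs" "hd xs = x" "last xs = y"
    show "2 \<le> length xs - 1"
    proof (rule ccontr)
      assume "\<not> 2 \<le> length xs - 1"
      then have "length xs \<le> 2" by simp
      with w assms show False
        by (cases xs rule: list.exhaust; cases "tl xs"; cases "tl (tl xs)"; auto simp: walk_def)
    qed
  qed
  then show ?thesis by (simp add: numeral_eq_enat)
qed

lemma gdist_ge1:
  assumes "x \<noteq> y"
  shows "1 \<le> gdist G x y"
proof -
  have "enat 1 \<le> gdist G x y"
  proof (rule gdist_ge)
    fix xs assume "walk G xs" "hd xs = x" "last xs = y"
    then show "1 \<le> length xs - 1" using assms
      by (cases xs rule: list.exhaust; cases "tl xs"; auto simp: walk_def)
  qed
  then show ?thesis by (simp add: one_enat_def)
qed

lemma twin_le: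
  assumes tw: "\<And>w. adj G x w \<Longrightarrow> w \<noteq> y \<Longrightarrow> adj G y w"
    and y: "y \<in> verts G" and z: "z \<noteq> x"
  shows "gdist G y z \<le> gdist G x z"
  unfolding gdist_def[of G x z]
proof (rule INF_greatest)
  fix xs assume "xs \<in> {xs. walk G xs \<and> hd xs = x \<and> last xs = z}"
  then have w: "walk G xs" "hd xs = x" "last xs = z" by auto
  then have "xs \<noteq> []" by (simp add: walk_def)
  then obtain a t where xs: "xs = a # t" by (cases xs) auto
  with w z have "t \<noteq> []" by auto
  then obtain b t2 where t: "t = b # t2" by (cases t) auto
  have wb: "walk G (b # t2)" and ab: "adj G x b" using w xs t by auto
  show "gdist G y z \<le> enat (length xs - 1)"
  proof (cases "b = y")
    case True
    have "gdist G y z \<le> enat (length (b # t2) - 1)"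
      by (rule gdist_le_walk) (use wb True w xs t in auto)
    also have "\<dots> \<le> enat (length xs - 1)" using xs t by simp
    finally show ?thesis .
  next
    case False
    then have "adj G y b" using tw ab by blast
    have "gdist G y z \<le> enat (length (y # b # t2) - 1)"
      by (rule gdist_le_walk) (use wb \<open>adj G y b\<close> y w xs t in auto)
    also have "\<dots> = enat (length xs - 1)" using xs t by simp
    finally show ?thesis .
  qed
qed



lemma adjKM: "adj (KM n q r) (b,i,k) (b',i',k') \<longleftrightarrow> (b,i,k) \<noteq> (b',i',k') \<and> ((b = b') = (i = i'))"
  by (auto simp: adj_def KM_def)

lemma vertsKM: "(b,i,k) \<in> verts (KM n q r) \<longleftrightarrow> i < n \<and> k < (if b then r i else q i)"
  by (simp add: verts_def KM_def)

lemma adjP: "adj (modprod (KM n q r) (KM m s p)) ((b,i,k),(c,j,l)) ((b',i',k'),(c',j',l'))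
   \<longleftrightarrow> ((b,i,k),(c,j,l)) \<noteq> ((b',i',k'),(c',j',l')) \<and> (((b = b') = (i = i')) = ((c = c') = (j = j')))"
  unfolding modprod_def adj_def[of "(_, _)"] using adjKM[of n q r] adjKM[of m s p]
  by (auto simp: adj_def)

lemma vertsP: "x \<in> verts (modprod G H) \<longleftrightarrow> fst x \<in> verts G \<and> snd x \<in> verts H"
  by (cases x) (simp add: modprod_def verts_def)

locale kmsetup =
  fixes n m :: nat and q r s p :: "nat \<Rightarrow> nat"
  assumes n3: "n \<ge> 3" and m3: "m \<ge> 3"
    and qr: "\<forall>i<n. q i \<ge> 1 \<and> r i \<ge> 1"
    and sp: "\<forall>j<m. s j \<ge> 1 \<and> p j \<ge> 1"
begin

abbreviation "P \<equiv> modprod (KM n q r) (KM m s p)"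
abbreviation "V \<equiv> verts P"

lemma inV: "((b,i,k),(c,j,l)) \<in> V \<longleftrightarrow> i < n \<and> k < (if b then r i else q i) \<and> j < m \<and> l < (if c then p j else s j)"
  by (simp add: vertsP vertsKM)

lemma inV0: "((b,i,0),(c,j,0)) \<in> V \<longleftrightarrow> i < n \<and> j < m"
  using qr sp by (auto simp: inV)

lemma fresh: "3 \<le> N \<Longrightarrow> \<exists>x<N. x \<noteq> a \<and> x \<noteq> (b::nat)"
proof -
  assume N: "3 \<le> N"
  consider "a \<noteq> 0 \<and> b \<noteq> 0" | "a \<noteq> 1 \<and> b \<noteq> 1" | "a \<noteq> 2 \<and> b \<noteq> 2"
    by (cases "a = 0 \<or> b = 0"; cases "a = 1 \<or> b = 1"; auto)
  then show ?thesis
  proof cases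
    case 1 then show ?thesis using N by (intro exI[of _ 0]) auto
  next
    case 2 then show ?thesis using N by (intro exI[of _ 1]) auto
  next
    case 3 then show ?thesis using N by (intro exI[of _ 2]) auto
  qed
qed

definition anti :: "((bool\<times>nat\<times>nat)\<times>(bool\<times>nat\<times>nat)) \<Rightarrow> ((bool\<times>nat\<times>nat)\<times>(bool\<times>nat\<times>nat)) \<Rightarrow> bool" where
  "anti u v \<longleftrightarrow> fst (snd (fst u)) = fst (snd (fst v)) \<and> fst (snd (snd u)) = fst (snd (snd v)) \<and>
     ((fst (fst u) = fst (fst v)) \<noteq> (fst (snd u) = fst (snd v)))"

lemma common_nb:
  assumes u: "u \<in> V" and v: "v \<in> V" and na: "\<not> anti u v"
  shows "\<exists>w\<in>V. adj P u w \<and> adj P w v"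
proof -
  obtain b i k c j l where uu: "u = ((b,i,k),(c,j,l))" by (metis prod.exhaust)
  obtain b' i' k' c' j' l' where vv: "v = ((b',i',k'),(c',j',l'))" by (metis prod.exhaust)
  have ij: "i < n" "i' < n" "j < m" "j' < m" using u v uu vv by (auto simp: inV)
  obtain i3 where i3: "i3 < n" "i3 \<noteq> i" "i3 \<noteq> i'" using fresh n3 by blast
  obtain j3 where j3: "j3 < m" "j3 \<noteq> j" "j3 \<noteq> j'" using fresh m3 by blast
  let ?W1 = "((b,i3,0::nat),(c,j3,0::nat))"
  let ?W2 = "((b,i3,0::nat),(c,j',0::nat))"
  let ?W3 = "((b,i,0::nat),(\<not>c,j3,0::nat))"
  have inw: "?W1 \<in> V" "?W2 \<in> V" "?W3 \<in> V" using ij i3 j3 inV0 by auto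
  have "(adj P u ?W1 \<and> adj P ?W1 v) \<or> (adj P u ?W2 \<and> adj P ?W2 v) \<or> (adj P u ?W3 \<and> adj P ?W3 v)"
    using na i3 j3 unfolding uu vv adjP anti_def
    by (cases b; cases b'; cases c; cases c'; auto)
  then show ?thesis using inw by blast
qed

lemma diam3:
  assumes u: "u \<in> V" and v: "v \<in> V"
  shows "gdist P u v \<le> 3"
proof (cases "anti u v")
  case False
  then obtain w where w: "w \<in> V" "adj P u w" "adj P w v" using common_nb u v by blast
  have "gdist P u v \<le> enat (length [u,w,v] - 1)"
    by (rule gdist_le_walk) (use u v w in auto)
  then show ?thesis by (rule order_trans) (simp add: numeral_eq_enat)
next
  case True
  obtain b i k c j l where uu: "u = ((b,i,k),(c,j,l))" by (metis prod.exhaust)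
  have ij: "i < n" "j < m" using u uu by (auto simp: inV)
  obtain i3 where i3: "i3 < n" "i3 \<noteq> i" using fresh[OF n3, of i i] by blast
  obtain j3 where j3: "j3 < m" "j3 \<noteq> j" using fresh[OF m3, of j j] by blast
  let ?W1 = "((b,i3,0::nat),(c,j3,0::nat))"
  have w1: "?W1 \<in> V" "adj P u ?W1" using i3 j3 inV0 uu by (auto simp: adjP)
  have "\<not> anti ?W1 v" using True i3 uu by (auto simp: anti_def)
  then obtain w where w: "w \<in> V" "adj P ?W1 w" "adj P w v" using common_nb w1 v by blast
  have "gdist P u v \<le> enat (length [u,?W1,w,v] - 1)"
    by (rule gdist_le_walk) (use u v w w1 in auto)
  then show ?thesis by (simp add: numeral_eq_enat numeral_3_eq_3)
qed

end


lemma e1: "(3::enat) \<le> a \<Longrightarrow> (1::enat) \<noteq> a + b"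
  by (cases a; cases b) (auto simp: numeral_eq_enat one_enat_def)
lemma e2: "(a::enat) \<le> 3 \<Longrightarrow> 3 \<le> b \<Longrightarrow> a \<noteq> b + 1"
  by (cases a; cases b) (auto simp: numeral_eq_enat one_enat_def)
lemma e3: "(a::enat) \<le> b \<Longrightarrow> b \<le> 3 \<Longrightarrow> a \<noteq> 1 + b"
  by (cases a; cases b) (auto simp: numeral_eq_enat one_enat_def)

lemma card_KM: "card (verts (KM n q r)) = (\<Sum>i<n. q i + r i)" and fin_KM: "finite (verts (KM n q r))"
proof -
  define B where "B i = ({False}\<times>{..<q i}) \<union> ({True}\<times>{..<r i})" for i
  have eq: "verts (KM n q r) = (\<lambda>(i,b,k). (b,i,k)) ` (SIGMA i:{..<n}. B i)"
    unfolding B_def by (force simp: verts_def KM_def split: if_splits)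
  have inj: "inj_on (\<lambda>(i,b,k). (b::bool,i::nat,k::nat)) (SIGMA i:{..<n}. B i)"
    by (auto simp: inj_on_def)
  have cB: "card (B i) = q i + r i" for i
    unfolding B_def by (subst card_Un_disjoint) (auto simp: card_cartesian_product_singleton)
  have fB: "finite (B i)" for i unfolding B_def by auto
  show "card (verts (KM n q r)) = (\<Sum>i<n. q i + r i)"
    unfolding eq by (simp add: card_image[OF inj] card_SigmaI fB cB)
  show "finite (verts (KM n q r))" unfolding eq using fB by auto
qed

lemma verts_modprod: "verts (modprod G H) = verts G \<times> verts H"
  by (simp add: modprod_def verts_def)

context kmsetup begin

lemma finV: "finite V" by (simp add: verts_modprod fin_KM)

lemma cardV: "card V = (\<Sum>i<n. q i + r i) * (\<Sum>j<m. s j + p j)"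
  by (simp add: verts_modprod card_cartesian_product card_KM)

lemma adj_sym: "adj P u v \<longleftrightarrow> adj P v u"
  by (cases u; cases v) (auto simp: adjP)

lemma anti_sym: "anti u v \<Longrightarrow> anti v u" by (auto simp: anti_def)

lemma anti_nadj: "anti u v \<Longrightarrow> \<not> adj P u v"
  by (cases u; cases v) (auto simp: adjP anti_def)

lemma anti_nocn: "anti u v \<Longrightarrow> \<not> (adj P u w \<and> adj P w v)"
  by (cases u; cases v; cases w) (auto simp: adjP anti_def)

lemma anti_xor: "anti u v \<Longrightarrow> w \<noteq> u \<Longrightarrow> w \<noteq> v \<Longrightarrow> adj P u w \<or> adj P v w"
  by (cases u; cases v; cases w) (auto simp: adjP anti_def)

definition blk :: "((bool\<times>nat\<times>nat)\<times>(bool\<times>nat\<times>nat)) \<Rightarrow> nat \<times> nat" where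
  "blk x = (fst (snd (fst x)), fst (snd (snd x)))"

lemma nonanti_twin: "blk x = blk y \<Longrightarrow> \<not> anti x y \<Longrightarrow> x \<noteq> y \<Longrightarrow> adj P x y \<and> (\<forall>w. adj P x w \<longrightarrow> w \<noteq> y \<longrightarrow> adj P y w)"
  by (cases x; cases y) (auto simp: adjP anti_def blk_def)

lemma nr:
  assumes x: "x \<in> V" and y: "y \<in> V" and xy: "x \<noteq> y" and b: "blk x = blk y"
    and z: "z \<in> V" "z \<noteq> x" "z \<noteq> y"
  shows "gdist P y z \<noteq> gdist P y x + gdist P x z"
proof (cases "anti x y")
  case True
  have ayx: "anti y x" using True anti_sym by blast
  have g3: "3 \<le> gdist P y x"
    by (rule gdist_ge3) (use xy ayx anti_nadj anti_nocn in auto)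
  from anti_xor[OF True z(2) z(3)] show ?thesis
  proof
    assume "adj P x z"
    then have "gdist P x z = 1" using gdist_adj x z by metis
    then show ?thesis using e2[OF diam3[OF y z(1)] g3] by simp
  next
    assume "adj P y z"
    then have "gdist P y z = 1" using gdist_adj y z by metis
    then show ?thesis using e1[OF g3] by simp
  qed
next
  case False
  from nonanti_twin[OF b False xy] have a: "adj P x y" and tw: "\<And>w. adj P x w \<Longrightarrow> w \<noteq> y \<Longrightarrow> adj P y w" by auto
  have "gdist P y x = 1" using gdist_adj y x a adj_sym xy by metis
  moreover have "gdist P y z \<le> gdist P x z" by (rule twin_le) (use tw y z in auto)
  ultimately show ?thesis using e3 diam3[OF x z(1)] by simp
qed

lemma lower:
  assumes S: "strong_resolving P S"
  shows "card V - n * m \<le> card S"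
proof -
  have SV: "S \<subseteq> V" using S by (simp add: strong_resolving_def)
  have inj: "inj_on blk (V - S)"
  proof (rule inj_onI, rule ccontr)
    fix x y assume xV: "x \<in> V - S" and yV: "y \<in> V - S" and b: "blk x = blk y" and xy: "x \<noteq> y"
    then obtain z where z: "z \<in> S" and eq: "gdist P y z = gdist P y x + gdist P x z \<or>
                gdist P x z = gdist P x y + gdist P y z"
      using S unfolding strong_resolving_def by blast
    have zz: "z \<in> V" "z \<noteq> x" "z \<noteq> y" using z SV xV yV by auto
    show False using eq nr[of x y z] nr[of y x z] xV yV xy b zz by auto
  qed
  have "blk ` (V - S) \<subseteq> {..<n} \<times> {..<m}"
    by (auto simp: blk_def vertsP vertsKM verts_modprod)
  then have "card (V - S) \<le> n * m"
    using card_image[OF inj] card_mono[of "{..<n} \<times> {..<m}"] by (metis card_cartesian_product card_lessThan finite_SigmaI finite_lessThan)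
  moreover have "card V \<le> card S + card (V - S)"
    using finV SV by (metis card_Un_le Un_Diff_cancel2 sup.absorb_iff1 Un_commute)
  ultimately show ?thesis by linarith
qed

end


context kmsetup begin

definition R :: "((bool\<times>nat\<times>nat)\<times>(bool\<times>nat\<times>nat)) set" where
  "R = (\<lambda>(i,j). ((False,i,0),(False,j,0))) ` ({..<n} \<times> {..<m})"

lemma cardR: "card R = n * m"
proof -
  have "inj_on (\<lambda>(i,j). ((False,i,0::nat),(False,j,0::nat))) ({..<n} \<times> {..<m})"
    by (auto simp: inj_on_def)
  then show ?thesis unfolding R_def by (simp add: card_image card_cartesian_product)
qed

lemma RV: "R \<subseteq> V" unfolding R_def using inV0 by auto

lemma gd1: "u \<in> V \<Longrightarrow> v \<in> V \<Longrightarrow> adj P u v \<Longrightarrow> gdist P u v = 1"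
proof -
  assume a: "u \<in> V" "v \<in> V" "adj P u v"
  have "u \<noteq> v" using a(3) by (cases u; cases v) (auto simp: adjP)
  then show ?thesis using gdist_adj[OF a] by simp
qed

lemma upper: "strong_resolving P (V - R)"
  unfolding strong_resolving_def
proof (intro conjI ballI impI)
  show "V - R \<subseteq> V" by auto
  fix x y assume xV: "x \<in> V" and yV: "y \<in> V" and xy: "x \<noteq> y"
  show "\<exists>z\<in>V - R. gdist P y z = gdist P y x + gdist P x z \<or> gdist P x z = gdist P x y + gdist P y z"
  proof (cases "x \<in> V - R")
    case True
    then show ?thesis using gdist_refl[OF xV] by (intro bexI[of _ x]) auto
  next
    case xR: False
    show ?thesis
    proof (cases "y \<in> V - R")
      case True
      then show ?thesis using gdist_refl[OF yV] by (intro bexI[of _ y]) auto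
    next
      case yR: False
      from xR xV obtain i j where x: "x = ((False,i,0),(False,j,0))" "i < n" "j < m" unfolding R_def by auto
      from yR yV obtain i' j' where y: "y = ((False,i',0),(False,j',0))" "i' < n" "j' < m" unfolding R_def by auto
      have nR: "((True,a,b),c) \<notin> R" "(d,(True,a,b)) \<notin> R" for a b c d unfolding R_def by auto
      consider "i \<noteq> i' \<and> j \<noteq> j'" | "i = i' \<and> j \<noteq> j'" | "i \<noteq> i' \<and> j = j'" using xy x y by auto
      then show ?thesis
      proof cases
        case 1
        obtain j3 where j3: "j3 < m" "j3 \<noteq> j" "j3 \<noteq> j'" using fresh m3 by blast
        define z where "z = ((False,i,0::nat),(True,j3,0::nat))"
        have zV: "z \<in> V - R" using z_def inV0 x y j3 nR by auto
        have a1: "adj P y x" "adj P x z" "\<not> adj P y z" "y \<noteq> z"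
          using 1 j3 unfolding x y z_def by (auto simp: adjP)
        have "gdist P y x = 1" "gdist P x z = 1" using gd1 a1 xV yV zV by auto
        moreover have "gdist P y z = 2"
        proof (rule antisym)
          have "gdist P y z \<le> enat (length [y,x,z] - 1)"
            by (rule gdist_le_walk) (use xV yV zV a1 in auto)
          then show "gdist P y z \<le> 2" by (simp add: numeral_eq_enat numeral_2_eq_2)
          show "2 \<le> gdist P y z" using gdist_ge2 a1 by metis
        qed
        ultimately show ?thesis using zV by (intro bexI[of _ z]) (auto simp: one_add_one)
      next
        case 2
        obtain j3 where j3: "j3 < m" "j3 \<noteq> j" "j3 \<noteq> j'" using fresh m3 by blast
        define w where "w = ((False,i,0::nat),(True,j3,0::nat))"
        define z where "z = ((True,i,0::nat),(False,j',0::nat))"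
        have zV: "z \<in> V - R" using z_def inV0 x y j3 nR by auto
        have wV: "w \<in> V" using w_def inV0 x j3 by auto
        have a1: "adj P y w" "adj P w x" "adj P x z" "\<not> adj P y x" "y \<noteq> z" "anti y z"
          using 2 j3 unfolding x y z_def w_def by (auto simp: adjP anti_def)
        have "gdist P x z = 1" using gd1 a1 xV zV by auto
        moreover have "gdist P y x = 2"
        proof (rule antisym)
          have "gdist P y x \<le> enat (length [y,w,x] - 1)"
            by (rule gdist_le_walk) (use xV yV wV a1 in auto)
          then show "gdist P y x \<le> 2" by (simp add: numeral_eq_enat numeral_2_eq_2)
          show "2 \<le> gdist P y x" using gdist_ge2 a1 xy by metis
        qed
        moreover have "gdist P y z = 3"
        proof (rule antisym)
          have "gdist P y z \<le> enat (length [y,w,x,z] - 1)"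
            by (rule gdist_le_walk) (use xV yV wV zV a1 in auto)
          then show "gdist P y z \<le> 3" by (simp add: numeral_eq_enat numeral_3_eq_3)
          show "3 \<le> gdist P y z" by (rule gdist_ge3) (use a1 anti_nadj anti_nocn in auto)
        qed
        ultimately show ?thesis using zV by (intro bexI[of _ z]) auto
      next
        case 3
        obtain i3 where i3: "i3 < n" "i3 \<noteq> i" "i3 \<noteq> i'" using fresh n3 by blast
        define w where "w = ((True,i3,0::nat),(False,j,0::nat))"
        define z where "z = ((False,i',0::nat),(True,j,0::nat))"
        have zV: "z \<in> V - R" using z_def inV0 x y i3 nR by auto
        have wV: "w \<in> V" using w_def inV0 x i3 by auto
        have a1: "adj P y w" "adj P w x" "adj P x z" "\<not> adj P y x" "y \<noteq> z" "anti y z"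
          using 3 i3 unfolding x y z_def w_def by (auto simp: adjP anti_def)
        have "gdist P x z = 1" using gd1 a1 xV zV by auto
        moreover have "gdist P y x = 2"
        proof (rule antisym)
          have "gdist P y x \<le> enat (length [y,w,x] - 1)"
            by (rule gdist_le_walk) (use xV yV wV a1 in auto)
          then show "gdist P y x \<le> 2" by (simp add: numeral_eq_enat numeral_2_eq_2)
          show "2 \<le> gdist P y x" using gdist_ge2 a1 xy by metis
        qed
        moreover have "gdist P y z = 3"
        proof (rule antisym)
          have "gdist P y z \<le> enat (length [y,w,x,z] - 1)"
            by (rule gdist_le_walk) (use xV yV wV zV a1 in auto)
          then show "gdist P y z \<le> 3" by (simp add: numeral_eq_enat numeral_3_eq_3)
          show "3 \<le> gdist P y z" by (rule gdist_ge3) (use a1 anti_nadj anti_nocn in auto)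
        qed
        ultimately show ?thesis using zV by (intro bexI[of _ z]) auto
      qed
    qed
  qed
qed

lemma sdim_eq: "sdim P = card V - n * m"
  unfolding sdim_def
proof (rule Least_equality)
  show "\<exists>S. strong_resolving P S \<and> card S = card V - n * m"
    using upper cardR RV finV by (intro exI[of _ "V - R"]) (simp add: card_Diff_subset finite_subset)
  fix k assume "\<exists>S. strong_resolving P S \<and> card S = k"
  then show "card V - n * m \<le> k" using lower by blast
qed

lemma nm_le: "n * m \<le> card V"
  using card_mono[OF finV RV] cardR by simp

end

theorem mainTheorem13:
  fixes n m :: nat and q r s p :: "nat \<Rightarrow> nat"
  assumes "n \<ge> 3" and "m \<ge> 3"
    and "\<forall>i<n. q i \<ge> 1 \<and> r i \<ge> 1"
    and "\<forall>j<m. s j \<ge> 1 \<and> p j \<ge> 1"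
  shows "int (sdim (modprod (KM n q r) (KM m s p))) =
           int (\<Sum>i<n. (q i + r i) * (\<Sum>j<m. s j + p j)) - int (n * m)"
proof -
  interpret kmsetup n m q r s p using assms by unfold_locales
  have "(\<Sum>i<n. (q i + r i) * (\<Sum>j<m. s j + p j)) = card V"
    by (simp add: cardV sum_distrib_right)
  then show ?thesis using sdim_eq nm_le by (simp add: of_nat_diff)
qed

end
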